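(* Let $X$ be a weakly connected digraph. Then for every $k\in\mathbb{N}$, $\lambda_1(H_k(X))\le\rho(H_k(X))\le3\lambda_1(H_k(X))$, where $\lambda_1(H_k(X))$ is the largest eigenvalue of $H_k(X)$.
   Context: A digraph $X$ has vertex set $\{v_1,\dots,v_n\}$ and a set of directed edges $\overrightarrow{e_{st}}$ (no loops); a pair with both $\overrightarrow{e_{st}}$ and $\overrightarrow{e_{ts}}$ is a digon. The underlying graph $\Gamma(X)$ is the simple graph with $v_s\sim v_t$ iff at least one of $\overrightarrow{e_{st}},\overrightarrow{e_{ts}}$ is in $X$; $X$ is weakly connected if $\Gamma(X)$ is connected. For $k\in\mathbb{N}$, the $k$-generalized Hermitian adjacency matrix $H_k(X)$ has $(s,t)$ entry $1$ if both $\overrightarrow{e_{st}},\overrightarrow{e_{ts}}\in E(X)$; $e^{i\pi/(k+1)}$ if $\overrightarrow{e_{st}}\in E(X)$ and $\overrightarrow{e_{ts}}\notin E(X)$; $e^{-i\pi/(k+1)}$ if $\overrightarrow{e_{st}}\notin E(X)$ and $\overrightarrow{e_{ts}}\in E(X)$; and $0$ otherwise. $\rho$ is the spectral radius. *)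

theory Defs
  imports "Jordan_Normal_Form.Spectral_Radius"
begin

text \<open>A digraph X on vertex set {0..<n} is given by its arc relation E :: nat => nat => bool,
  where E s t means the arc from v_s to v_t is present.\<close>

definition digraph :: "nat \<Rightarrow> (nat \<Rightarrow> nat \<Rightarrow> bool) \<Rightarrow> bool" where
  "digraph n E \<longleftrightarrow> (\<forall>s t. E s t \<longrightarrow> s < n \<and> t < n) \<and> (\<forall>s. \<not> E s s)"

definition underlying_adj :: "(nat \<Rightarrow> nat \<Rightarrow> bool) \<Rightarrow> nat \<Rightarrow> nat \<Rightarrow> bool" where
  "underlying_adj E s t \<longleftrightarrow> s \<noteq> t \<and> (E s t \<or> E t s)"

definition weakly_connected :: "nat \<Rightarrow> (nat \<Rightarrow> nat \<Rightarrow> bool) \<Rightarrow> bool" where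
  "weakly_connected n E \<longleftrightarrow> 0 < n \<and>
     (\<forall>s<n. \<forall>t<n. (underlying_adj E)\<^sup>*\<^sup>* s t)"

definition herm_adj_k :: "nat \<Rightarrow> nat \<Rightarrow> (nat \<Rightarrow> nat \<Rightarrow> bool) \<Rightarrow> complex mat" where
  "herm_adj_k k n E = mat n n (\<lambda>(s, t).
     if E s t \<and> E t s then 1
     else if E s t then cis (pi / real (k + 1))
     else if E t s then cis (- pi / real (k + 1))
     else 0)"

definition lambda1 :: "complex mat \<Rightarrow> real" where
  "lambda1 A = Max {x :: real. eigenvalue A (complex_of_real x)}"

end

theory Submission imports Defs "HOL-Analysis.Analysis" begin

definition ipf :: "nat \<Rightarrow> (nat\<Rightarrow>complex) \<Rightarrow> (nat\<Rightarrow>complex) \<Rightarrow> complex" where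
  "ipf n f g = (\<Sum>s<n. cnj (f s) * g s)"
definition nrm :: "nat \<Rightarrow> (nat\<Rightarrow>complex) \<Rightarrow> real" where
  "nrm n f = (\<Sum>s<n. (cmod (f s))^2)"
definition mvf :: "nat \<Rightarrow> complex mat \<Rightarrow> (nat\<Rightarrow>complex) \<Rightarrow> nat \<Rightarrow> complex" where
  "mvf n H f = (\<lambda>s. \<Sum>t<n. H $$ (s,t) * f t)"
definition bf :: "nat \<Rightarrow> complex mat \<Rightarrow> (nat\<Rightarrow>complex) \<Rightarrow> (nat\<Rightarrow>complex) \<Rightarrow> complex" where
  "bf n H f g = ipf n f (mvf n H g)"
definition herm :: "nat \<Rightarrow> complex mat \<Rightarrow> bool" where
  "herm n H \<longleftrightarrow> (\<forall>s<n. \<forall>t<n. H $$ (t,s) = cnj (H $$ (s,t)))"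

lemma ipf_self: "ipf n f f = complex_of_real (nrm n f)"
  unfolding ipf_def nrm_def of_real_sum
  by (intro sum.cong refl) (metis complex_norm_square of_real_power mult.commute)

lemma nrm_nonneg: "nrm n f \<ge> 0"
  unfolding nrm_def by (simp add: sum_nonneg)

lemma nrm_zero: "nrm n f = 0 \<Longrightarrow> s < n \<Longrightarrow> f s = 0"
  unfolding nrm_def by (subst (asm) sum_nonneg_eq_0_iff) auto

lemma herm_cnj: "herm n H \<Longrightarrow> s < n \<Longrightarrow> t < n \<Longrightarrow> cnj (H$$(s,t)) = H$$(t,s)"
  unfolding herm_def by (metis complex_cnj_cnj)

lemma bf_cnj:
  assumes "herm n H"
  shows "bf n H g f = cnj (bf n H f g)"
proof -
  have "cnj (bf n H f g) = (\<Sum>s<n. f s * (\<Sum>t<n. cnj (H$$(s,t)) * cnj (g t)))"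
    unfolding bf_def ipf_def mvf_def by (simp only: cnj_sum complex_cnj_mult complex_cnj_cnj)
  also have "\<dots> = (\<Sum>s<n. \<Sum>t<n. f s * (cnj (H$$(s,t)) * cnj (g t)))"
    by (simp only: sum_distrib_left)
  also have "\<dots> = (\<Sum>s<n. \<Sum>t<n. cnj (g t) * (H$$(t,s) * f s))"
    using assms by (intro sum.cong refl) (simp add: herm_cnj)
  also have "\<dots> = (\<Sum>t<n. \<Sum>s<n. cnj (g t) * (H$$(t,s) * f s))"
    by (rule sum.swap)
  also have "\<dots> = bf n H g f"
    unfolding bf_def ipf_def mvf_def by (simp only: sum_distrib_left)
  finally show ?thesis by simp
qed

lemma ipf_add_left: "ipf n (\<lambda>i. f i + g i) h = ipf n f h + ipf n g h"
  unfolding ipf_def by (simp add: sum.distrib distrib_right)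
lemma ipf_add_right: "ipf n h (\<lambda>i. f i + g i) = ipf n h f + ipf n h g"
  unfolding ipf_def by (simp add: sum.distrib distrib_left)
lemma ipf_smult_left: "ipf n (\<lambda>i. c * f i) h = cnj c * ipf n f h"
  unfolding ipf_def by (simp add: sum_distrib_left mult.assoc)
lemma ipf_smult_right: "ipf n h (\<lambda>i. c * f i) = c * ipf n h f"
  unfolding ipf_def by (simp add: sum_distrib_left mult.left_commute)
lemma mvf_add: "mvf n H (\<lambda>i. f i + g i) = (\<lambda>s. mvf n H f s + mvf n H g s)"
  unfolding mvf_def by (simp add: sum.distrib distrib_left)
lemma mvf_smult: "mvf n H (\<lambda>i. c * f i) = (\<lambda>s. c * mvf n H f s)"
  unfolding mvf_def by (simp add: sum_distrib_left mult.left_commute)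

lemma ipf_expand:
  "ipf n (\<lambda>i. x i + c * d i) (\<lambda>i. x i + c * d i) =
    ipf n x x + c * ipf n x d + cnj c * ipf n d x + cnj c * c * ipf n d d"
proof -
  have "ipf n (\<lambda>i. x i + c * d i) (\<lambda>i. x i + c * d i)
     = ipf n x (\<lambda>i. x i + c * d i) + cnj c * ipf n d (\<lambda>i. x i + c * d i)"
    by (simp only: ipf_add_left ipf_smult_left)
  also have "\<dots> = ipf n x x + c * ipf n x d + cnj c * (ipf n d x + c * ipf n d d)"
    by (simp only: ipf_add_right ipf_smult_right)
  finally show ?thesis by (simp add: algebra_simps)
qed

lemma bf_expand:
  "bf n H (\<lambda>i. x i + c * d i) (\<lambda>i. x i + c * d i) =
    bf n H x x + c * bf n H x d + cnj c * bf n H d x + cnj c * c * bf n H d d"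
proof -
  have m: "mvf n H (\<lambda>i. x i + c * d i) = (\<lambda>s. mvf n H x s + c * mvf n H d s)"
    by (simp only: mvf_add mvf_smult)
  have "bf n H (\<lambda>i. x i + c * d i) (\<lambda>i. x i + c * d i)
     = ipf n x (\<lambda>s. mvf n H x s + c * mvf n H d s) + cnj c * ipf n d (\<lambda>s. mvf n H x s + c * mvf n H d s)"
    unfolding bf_def m by (simp only: ipf_add_left ipf_smult_left)
  also have "\<dots> = bf n H x x + c * bf n H x d + cnj c * (bf n H d x + c * bf n H d d)"
    unfolding bf_def by (simp only: ipf_add_right ipf_smult_right)
  finally show ?thesis by (simp add: algebra_simps)
qed

lemma bf_scale:
  "bf n H (\<lambda>i. c * x i) (\<lambda>i. c * x i) = cnj c * c * bf n H x x"
  unfolding bf_def mvf_smult ipf_smult_left ipf_smult_right by simp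

lemma bf_cong: "(\<And>i. i < n \<Longrightarrow> f i = g i) \<Longrightarrow> bf n H f f = bf n H g g"
  unfolding bf_def ipf_def mvf_def by (intro sum.cong refl) auto

lemma nrm_cong: "(\<And>i. i < n \<Longrightarrow> f i = g i) \<Longrightarrow> nrm n f = nrm n g"
  unfolding nrm_def by (intro sum.cong refl) auto

lemma bf_real: "herm n H \<Longrightarrow> bf n H f f = complex_of_real (Re (bf n H f f))"
proof -
  assume "herm n H"
  hence "cnj (bf n H f f) = bf n H f f" using bf_cnj[of n H f f] by simp
  thus ?thesis by (simp add: complex_eq_iff)
qed

lemma cont_coord: "continuous_on S (\<lambda>f::nat\<Rightarrow>complex. f i)"
  by (rule continuous_on_subset[OF continuous_on_product_coordinates]) simp

lemma cont_nrm: "continuous_on S (\<lambda>f. nrm n f)"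
  unfolding nrm_def by (intro continuous_on_sum continuous_on_power continuous_on_norm cont_coord)

lemma cont_bf: "continuous_on S (\<lambda>f. Re (bf n H f f))"
  unfolding bf_def ipf_def mvf_def
  by (intro continuous_on_Re continuous_on_sum continuous_on_mult continuous_on_cnj continuous_on_const cont_coord)

lemma compact_S: "compact ({f::nat\<Rightarrow>complex. \<forall>i. f i \<in> cball 0 1} \<inter> {f. nrm n f = 1})"
proof (rule compact_Int_closed)
  have "compactin (product_topology (\<lambda>_. euclidean) UNIV) (PiE UNIV (\<lambda>_::nat. cball (0::complex) 1))"
    by (subst compactin_PiE) (auto simp: compactin_euclidean_iff compact_cball)
  moreover have "PiE UNIV (\<lambda>_::nat. cball (0::complex) 1) = {f::nat\<Rightarrow>complex. \<forall>i. f i \<in> cball 0 1}"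
    by (auto simp: PiE_UNIV_domain Pi_def)
  ultimately show "compact {f::nat\<Rightarrow>complex. \<forall>i. f i \<in> cball 0 1}"
    by (simp add: euclidean_product_topology compactin_euclidean_iff)
  show "closed {f. nrm n f = 1}"
    by (intro closed_Collect_eq cont_nrm continuous_on_const)
qed



lemma bf_zero: "(\<And>i. i < n \<Longrightarrow> f i = 0) \<Longrightarrow> bf n H f f = 0"
  unfolding bf_def ipf_def mvf_def by simp

lemma exists_max:
  assumes n: "n > 0" and h: "herm n H"
  shows "\<exists>M x. nrm n x = 1 \<and> (\<forall>f. Re (bf n H f f) \<le> M * nrm n f) \<and> (\<forall>s<n. mvf n H x s = M * x s)"
proof -
  define S where "S = {f::nat\<Rightarrow>complex. \<forall>i. f i \<in> cball 0 1} \<inter> {f. nrm n f = 1}"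
  define e0 :: "nat \<Rightarrow> complex" where "e0 = (\<lambda>i. if i = 0 then 1 else 0)"
  have "nrm n e0 = (\<Sum>s<n. if s = 0 then 1 else 0)"
    unfolding nrm_def e0_def by (intro sum.cong refl) auto
  also have "\<dots> = 1" using n by simp
  finally have "e0 \<in> S" unfolding S_def e0_def by auto
  hence "S \<noteq> {}" by auto
  from continuous_attains_sup[OF compact_S[of n, folded S_def] this cont_bf]
  obtain x where xS: "x \<in> S" and xmax: "\<And>y. y \<in> S \<Longrightarrow> Re (bf n H y y) \<le> Re (bf n H x x)"
    by blast
  define M where "M = Re (bf n H x x)"
  have nx: "nrm n x = 1" using xS unfolding S_def by auto
  have hom: "Re (bf n H f f) \<le> M * nrm n f" for f
  proof (cases "nrm n f = 0")
    case True
    then show ?thesis using bf_zero[of n f H] nrm_zero[OF True] by simp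
  next
    case False
    define c where "c = nrm n f"
    have c: "c > 0" using False nrm_nonneg[of n f] unfolding c_def by auto
    define a where "a = complex_of_real (1 / sqrt c)"
    define g where "g = (\<lambda>i. if i < n then a * f i else 0)"
    have "nrm n g = nrm n (\<lambda>i. a * f i)" by (rule nrm_cong) (simp add: g_def)
    also have "\<dots> = (\<Sum>s<n. (cmod (f s))^2 / c)"
      unfolding nrm_def a_def using c
      by (intro sum.cong refl) (simp add: norm_divide power_divide)
    also have "\<dots> = 1" using c unfolding c_def by (simp add: sum_divide_distrib[symmetric] nrm_def)
    finally have ng: "nrm n g = 1" .
    have "cmod (g i) \<le> 1" for i
    proof (cases "i < n")
      case True
      have "(cmod (g i))^2 \<le> nrm n g"
        unfolding nrm_def using True by (intro member_le_sum) auto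
      then show ?thesis using ng by (simp add: power_le_one_iff abs_square_le_1)
    qed (simp add: g_def)
    hence "g \<in> S" using ng unfolding S_def by auto
    hence le: "Re (bf n H g g) \<le> M" using xmax unfolding M_def by blast
    have "bf n H g g = bf n H (\<lambda>i. a * f i) (\<lambda>i. a * f i)" by (rule bf_cong) (simp add: g_def)
    also have "\<dots> = cnj a * a * bf n H f f" by (rule bf_scale)
    also have "cnj a * a = complex_of_real (1 / c)" unfolding a_def using c
      by (simp flip: of_real_mult)
    finally have "Re (bf n H g g) = Re (bf n H f f) / c" by simp
    with le c show ?thesis unfolding c_def by (simp add: field_simps)
  qed
  define d where "d = (\<lambda>s. mvf n H x s - M * x s)"
  define D where "D = nrm n d"
  define K where "K = Re (bf n H d d) - M * nrm n d"
  have bdx: "Re (bf n H d x) = D + M * Re (ipf n d x)"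
  proof -
    have eqd: "bf n H d x - complex_of_real M * ipf n d x = ipf n d d"
      unfolding bf_def ipf_def d_def by (simp add: sum_distrib_left sum_subtractf algebra_simps)
    have "Re (bf n H d x) - M * Re (ipf n d x) = Re (ipf n d d)"
      using arg_cong[OF eqd, of Re] by simp
    thus ?thesis unfolding D_def ipf_self by simp
  qed
  have bxd: "Re (bf n H x d) = Re (bf n H d x)" using bf_cnj[OF h, of x d] by simp
  have ixd: "Re (ipf n x d) = Re (ipf n d x)"
  proof -
    have "ipf n x d = cnj (ipf n d x)" unfolding ipf_def by (simp add: cnj_sum mult.commute)
    thus ?thesis by simp
  qed
  have key: "2 * t * D + t^2 * K \<le> 0" for t :: real
  proof -
    define w where "w = (\<lambda>i. x i + complex_of_real t * d i)"
    have ineq: "Re (bf n H w w) \<le> M * nrm n w" by (rule hom)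
    have bw: "bf n H w w = bf n H x x + complex_of_real t * bf n H x d + complex_of_real t * bf n H d x
       + complex_of_real (t^2) * bf n H d d"
      unfolding w_def bf_expand by (simp add: power2_eq_square)
    have R1: "Re (bf n H w w) = M + t * Re (bf n H x d) + t * Re (bf n H d x) + t^2 * Re (bf n H d d)"
      unfolding bw M_def by simp
    have iw: "ipf n w w = ipf n x x + complex_of_real t * ipf n x d + complex_of_real t * ipf n d x
       + complex_of_real (t^2) * ipf n d d"
      unfolding w_def ipf_expand by (simp add: power2_eq_square)
    have N1: "nrm n w = 1 + t * Re (ipf n x d) + t * Re (ipf n d x) + t^2 * nrm n d"
      using arg_cong[OF iw, of Re] nx unfolding ipf_self by simp
    have a1: "t * Re (bf n H x d) = t * D + t * (M * Re (ipf n d x))" using bxd bdx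
      by (simp add: algebra_simps)
    have a2: "t * Re (bf n H d x) = t * D + t * (M * Re (ipf n d x))" using bdx
      by (simp add: algebra_simps)
    have a3: "M * nrm n w = M + 2 * (t * (M * Re (ipf n d x))) + t^2 * (M * nrm n d)"
      unfolding N1 ixd by (simp add: algebra_simps)
    have a4: "t^2 * K = t^2 * Re (bf n H d d) - t^2 * (M * nrm n d)"
      unfolding K_def by (simp add: algebra_simps)
    show ?thesis using ineq R1 a1 a2 a3 a4 by linarith
  qed
  have "D = 0"
  proof (rule ccontr)
    assume "D \<noteq> 0"
    hence Dp: "D > 0" using nrm_nonneg[of n d] unfolding D_def by auto
    define t where "t = D / (\<bar>K\<bar> + 1)"
    have tp: "t > 0" unfolding t_def using Dp by auto
    have "2 * t * D \<le> t^2 * \<bar>K\<bar>" 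
    proof -
      have "t^2 * (-K) \<le> t^2 * \<bar>K\<bar>" by (rule mult_left_mono) auto
      thus ?thesis using key[of t] by simp
    qed
    hence "2 * D \<le> t * \<bar>K\<bar>" using tp by (simp add: power2_eq_square)
    also have "t * \<bar>K\<bar> < D" unfolding t_def using Dp
      by (simp add: field_simps)
    finally show False using Dp by simp
  qed
  hence "\<forall>s<n. mvf n H x s = M * x s"
    using nrm_zero[of n d] unfolding D_def d_def by auto
  thus ?thesis using nx hom by blast
qed



lemma eig_to_f:
  assumes H: "H \<in> carrier_mat n n" and e: "eigenvalue H mu"
  shows "\<exists>f. nrm n f > 0 \<and> (\<forall>s<n. mvf n H f s = mu * f s)"
proof -
  from e obtain v where v: "v \<in> carrier_vec n" "v \<noteq> 0\<^sub>v n" "H *\<^sub>v v = mu \<cdot>\<^sub>v v"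
    unfolding eigenvalue_def eigenvector_def using H by auto
  define f where "f = (\<lambda>i. v $ i)"
  have eq: "mvf n H f s = mu * f s" if s: "s < n" for s
  proof -
    have "(H *\<^sub>v v) $ s = (mu \<cdot>\<^sub>v v) $ s" using v by simp
    moreover have "(H *\<^sub>v v) $ s = mvf n H f s"
      using H v(1) s unfolding mvf_def f_def
      by (simp add: scalar_prod_def atLeast0LessThan)
    moreover have "(mu \<cdot>\<^sub>v v) $ s = mu * f s" using v s unfolding f_def by simp
    ultimately show ?thesis by simp
  qed
  obtain i where i: "i < n" "v $ i \<noteq> 0" using v(1,2) by (metis carrier_vecD index_zero_vec(1) eq_vecI index_zero_vec(2))
  have "nrm n f \<noteq> 0" using nrm_zero[of n f i] i unfolding f_def by auto
  hence "nrm n f > 0" using nrm_nonneg[of n f] by linarith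
  thus ?thesis using eq by blast
qed

lemma f_to_eig:
  assumes H: "H \<in> carrier_mat n n" and nz: "nrm n x > 0" and eq: "\<forall>s<n. mvf n H x s = mu * x s"
  shows "eigenvalue H mu"
proof -
  define v where "v = Matrix.vec n x"
  have vc: "v \<in> carrier_vec n" unfolding v_def by simp
  obtain i where i: "i < n" "x i \<noteq> 0"
  proof (rule ccontr)
    assume "\<not> thesis"
    hence "\<forall>i<n. x i = 0" using that by blast
    hence "nrm n x = 0" unfolding nrm_def by simp
    thus False using nz by simp
  qed
  have "v \<noteq> 0\<^sub>v n" using i unfolding v_def by (metis index_vec index_zero_vec(1))
  moreover have "H *\<^sub>v v = mu \<cdot>\<^sub>v v"
  proof (rule eq_vecI)
    show "dim_vec (H *\<^sub>v v) = dim_vec (mu \<cdot>\<^sub>v v)" using H unfolding v_def by simp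
    fix s assume "s < dim_vec (mu \<cdot>\<^sub>v v)"
    hence s: "s < n" unfolding v_def by simp
    have "(H *\<^sub>v v) $ s = mvf n H x s"
      using H s unfolding mvf_def v_def
      by (simp add: scalar_prod_def atLeast0LessThan)
    thus "(H *\<^sub>v v) $ s = (mu \<cdot>\<^sub>v v) $ s" using eq s unfolding v_def by simp
  qed
  ultimately show ?thesis using vc H unfolding eigenvalue_def eigenvector_def by auto
qed

lemma key_ineq:
  assumes nn: "\<forall>s<n. \<forall>t<n. Re (H$$(s,t)) \<ge> 0"
  shows "Re (bf n H f f) + Re (bf n H (\<lambda>i. cnj (f i)) (\<lambda>i. cnj (f i)))
     + 2 * Re (bf n H (\<lambda>i. complex_of_real (cmod (f i))) (\<lambda>i. complex_of_real (cmod (f i)))) \<ge> 0"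
proof -
  have pt: "Re (cnj p * h * q) + Re (cnj (cnj p) * h * cnj q)
      + 2 * Re (cnj (complex_of_real (cmod p)) * h * complex_of_real (cmod q)) \<ge> 0"
    if h: "Re h \<ge> 0" for p q h :: complex
  proof -
    define u where "u = cnj p * q"
    have "Re (cnj p * h * q) + Re (cnj (cnj p) * h * cnj q) = 2 * Re h * Re u"
      unfolding u_def by (simp add: algebra_simps)
    moreover have "Re (cnj (complex_of_real (cmod p)) * h * complex_of_real (cmod q)) = cmod u * Re h"
      unfolding u_def by (simp add: norm_mult)
    moreover have "Re u + cmod u \<ge> 0" using abs_Re_le_cmod[of u] by linarith
    moreover have "2 * Re h * Re u + 2 * (cmod u * Re h) = 2 * Re h * (Re u + cmod u)"
      by (simp add: algebra_simps)
    moreover have "2 * Re h * (Re u + cmod u) \<ge> 0" using h \<open>Re u + cmod u \<ge> 0\<close> by simp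
    ultimately show ?thesis by linarith
  qed
  let ?g = "\<lambda>i. cnj (f i)" and ?a = "\<lambda>i. complex_of_real (cmod (f i))"
  have bfe: "Re (bf n H y y) = (\<Sum>s<n. \<Sum>t<n. Re (cnj (y s) * H$$(s,t) * y t))" for y
    unfolding bf_def ipf_def mvf_def by (simp add: sum_distrib_left mult.assoc)
  have "Re (bf n H f f) + Re (bf n H ?g ?g) + 2 * Re (bf n H ?a ?a)
     = (\<Sum>s<n. \<Sum>t<n. Re (cnj (f s) * H$$(s,t) * f t) + Re (cnj (?g s) * H$$(s,t) * ?g t)
          + 2 * Re (cnj (?a s) * H$$(s,t) * ?a t))"
    unfolding bfe by (simp add: sum.distrib sum_distrib_left)
  also have "\<dots> \<ge> 0"
    using nn pt by (intro sum_nonneg) auto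
  finally show ?thesis .
qed



lemma main_abs:
  fixes H :: "complex mat"
  assumes H: "H \<in> carrier_mat n n" and n: "n > 0" and h: "herm n H"
    and nn: "\<forall>s<n. \<forall>t<n. Re (H$$(s,t)) \<ge> 0"
    and exists_max: "\<exists>M x. nrm n x = 1 \<and> (\<forall>f. Re (bf n H f f) \<le> M * nrm n f) \<and> (\<forall>s<n. mvf n H x s = M * x s)"
    and eig_to_f: "\<And>mu. eigenvalue H mu \<Longrightarrow> \<exists>f. nrm n f > 0 \<and> (\<forall>s<n. mvf n H f s = mu * f s)"
    and f_to_eig: "\<And>x mu. nrm n x > 0 \<Longrightarrow> \<forall>s<n. mvf n H x s = mu * x s \<Longrightarrow> eigenvalue H mu"
    and key_ineq: "\<And>f. Re (bf n H f f) + Re (bf n H (\<lambda>i. cnj (f i)) (\<lambda>i. cnj (f i)))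
     + 2 * Re (bf n H (\<lambda>i. complex_of_real (cmod (f i))) (\<lambda>i. complex_of_real (cmod (f i)))) \<ge> 0"
  shows "lambda1 H \<le> spectral_radius H \<and> spectral_radius H \<le> 3 * lambda1 H"
proof -
  obtain M x where nx: "nrm n x = 1" and hom: "\<And>f. Re (bf n H f f) \<le> M * nrm n f"
    and ex: "\<forall>s<n. mvf n H x s = M * x s" using exists_max by blast
  have eM: "eigenvalue H (complex_of_real M)" using f_to_eig[of x] nx ex by simp
  have real_eig: "mu = complex_of_real (Re mu) \<and> Re mu \<le> M" if e: "eigenvalue H mu" for mu
  proof -
    obtain f where f: "nrm n f > 0" "\<forall>s<n. mvf n H f s = mu * f s" using eig_to_f[OF e] by blast
    have "bf n H f f = ipf n f (\<lambda>s. mu * f s)"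
      unfolding bf_def ipf_def using f(2) by (intro sum.cong refl) simp
    also have "\<dots> = mu * complex_of_real (nrm n f)" unfolding ipf_def ipf_self[symmetric]
      by (simp add: sum_distrib_left mult.left_commute)
    finally have bfe: "bf n H f f = mu * complex_of_real (nrm n f)" .
    have "Im (bf n H f f) = 0" using bf_real[OF h, of f] by (metis Im_complex_of_real)
    hence "Im mu = 0" using bfe f(1) by simp
    moreover have "Re mu * nrm n f \<le> M * nrm n f" using hom[of f] bfe by simp
    hence "Re mu \<le> M" using f(1) by simp
    ultimately show ?thesis by (simp add: complex_eq_iff)
  qed
  have fin: "finite {r::real. eigenvalue H (complex_of_real r)}"
  proof -
    have "{r::real. eigenvalue H (complex_of_real r)} \<subseteq> Re ` spectrum H"
    proof
      fix r assume "r \<in> {r::real. eigenvalue H (complex_of_real r)}"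
      hence "complex_of_real r \<in> spectrum H" unfolding spectrum_def by simp
      thus "r \<in> Re ` spectrum H" by (metis Re_complex_of_real image_eqI)
    qed
    thus ?thesis using card_finite_spectrum(1)[OF H] finite_subset by blast
  qed
  have lam: "lambda1 H = M" unfolding lambda1_def
  proof (rule Max_eqI[OF fin])
    show "M \<in> {r. eigenvalue H (complex_of_real r)}" using eM by simp
    fix y assume "y \<in> {r. eigenvalue H (complex_of_real r)}"
    thus "y \<le> M" using real_eig[of "complex_of_real y"] by simp
  qed
  have "norm (complex_of_real M) \<in> norm ` spectrum H" using eM unfolding spectrum_def
    by (intro image_eqI[of _ _ "complex_of_real M"]) auto
  hence "\<bar>M\<bar> \<le> spectral_radius H" using spectral_radius_mem_max(2)[OF H n] by simp
  hence part1: "M \<le> spectral_radius H" by simp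
  obtain mu where mu: "mu \<in> spectrum H" "spectral_radius H = norm mu"
    using spectral_radius_mem_max(1)[OF H n] by blast
  have emu: "eigenvalue H mu" using mu(1) unfolding spectrum_def by simp
  define r where "r = Re mu"
  have mur: "mu = complex_of_real r" and rM: "r \<le> M" using real_eig[OF emu] unfolding r_def by auto
  have part2: "spectral_radius H \<le> 3 * M"
  proof (cases "r \<ge> 0")
    case True
    then show ?thesis using mu(2) mur rM by simp
  next
    case False
    obtain f where f: "nrm n f > 0" "\<forall>s<n. mvf n H f s = mu * f s" using eig_to_f[OF emu] by blast
    have "bf n H f f = ipf n f (\<lambda>s. mu * f s)"
      unfolding bf_def ipf_def using f(2) by (intro sum.cong refl) simp
    also have "\<dots> = mu * complex_of_real (nrm n f)" unfolding ipf_def ipf_self[symmetric]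
      by (simp add: sum_distrib_left mult.left_commute)
    finally have bfe: "Re (bf n H f f) = r * nrm n f" using mur by simp
    have n1: "nrm n (\<lambda>i. cnj (f i)) = nrm n f" unfolding nrm_def by simp
    have n2: "nrm n (\<lambda>i. complex_of_real (cmod (f i))) = nrm n f" unfolding nrm_def by simp
    have "- r * nrm n f \<le> 3 * M * nrm n f"
      using key_ineq[of f] hom[of "\<lambda>i. cnj (f i)"] hom[of "\<lambda>i. complex_of_real (cmod (f i))"] n1 n2 bfe
      by (simp add: algebra_simps)
    hence "(- r) * nrm n f \<le> (3 * M) * nrm n f" by simp
    hence "- r \<le> 3 * M" using f(1) by (rule mult_right_le_imp_le)
    thus ?thesis using mu(2) mur False by simp
  qed
  show ?thesis using part1 part2 lam by simp
qed


lemma herm_adj_props: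
  assumes k: "k \<ge> 1"
  shows "herm_adj_k k n E \<in> carrier_mat n n" "herm n (herm_adj_k k n E)"
    "\<forall>s<n. \<forall>t<n. Re (herm_adj_k k n E $$ (s,t)) \<ge> 0"
proof -
  show "herm_adj_k k n E \<in> carrier_mat n n" by (simp add: herm_adj_k_def)
  have m: "- pi / real (k + 1) = - (pi / real (k + 1))" by simp
  show "herm n (herm_adj_k k n E)"
    unfolding herm_def herm_adj_k_def m by (auto simp: cis_cnj)
  have le: "pi / real (k + 1) \<le> pi / 2"
    using k by (intro divide_left_mono) auto
  have "0 < pi / real (k + 1)" by simp
  hence "- (pi / 2) \<le> pi / real (k + 1)" using pi_gt_zero by linarith
  hence c: "cos (pi / real (k + 1)) \<ge> 0" using le by (intro cos_ge_zero)
  show "\<forall>s<n. \<forall>t<n. Re (herm_adj_k k n E $$ (s,t)) \<ge> 0"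
    unfolding herm_adj_k_def m using c by auto
qed

theorem theorem5p4:
  fixes n k :: nat and E :: "nat \<Rightarrow> nat \<Rightarrow> bool"
  assumes "digraph n E" and "weakly_connected n E" and "k \<ge> 1"
  shows "lambda1 (herm_adj_k k n E) \<le> spectral_radius (herm_adj_k k n E)
       \<and> spectral_radius (herm_adj_k k n E) \<le> 3 * lambda1 (herm_adj_k k n E)"
proof -
  have n: "n > 0" using assms(2) unfolding weakly_connected_def by simp
  note P = herm_adj_props[OF assms(3), of n E]
  show ?thesis
    by (rule main_abs[OF P(1) n P(2) P(3) exists_max[OF n P(2)] eig_to_f[OF P(1)] f_to_eig[OF P(1)] key_ineq[OF P(3)]])
qed

end
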